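(* Let $L$ and $L_1$ be linear partial differential operators in $\mathbb{R}^n$ connected by an Intertwining Laplace Transformation, i.e. there exist differential operators $X_1, X_2, H \in \mathbf{F}[D_{x_1},\ldots,D_{x_n}]$ with $H\neq 0$ such that $L = X_1X_2 - H$, the element $\omega = -[X_2,H]H^{-1}$ of the skew Ore field $\mathbf{F}(D_{x_1},\ldots,D_{x_n})$ is a differential operator (belongs to $\mathbf{F}[D_{x_1},\ldots,D_{x_n}]$), and $L_1 = X_2X_1 + \omega X_1 - H$. Then the principal symbols of $L$ and $L_1$ coincide, $\mathrm{Sym}\, L = \mathrm{Sym}\, L_1$ (even if $\mathrm{ord}\, H \geq \mathrm{ord}\, L$).
   Context: $\mathbf{F}$ is a differential field of functions of $x_1,\ldots,x_n$ (differentially closed, large enough), $\mathbf{F}[D_{x_1},\ldots,D_{x_n}]$ is the ring of linear partial differential operators with coefficients in $\mathbf{F}$, and $\mathbf{F}(D_{x_1},\ldots,D_{x_n})$ is its skew Ore field of formal fractions $P^{-1}Q$ (with $P^{-1}Q\sim K^{-1}N$ iff $SP=TK$, $SQ=TN$ for some nonzero $S,T$); the order of $P^{-1}Q$ is $\mathrm{ord}\,Q-\mathrm{ord}\,P$. $[A,B]=AB-BA$. $\mathrm{Sym}$ denotes the principal symbol (highest-order part, as a polynomial in commuting variables $\xi_i$ corresponding to $D_{x_i}$). *)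

theory Defs
  imports Main
begin

text \<open>Linear partial differential operators in n variables x_0,...,x_{n-1} with
coefficients in a (commutative) differential field 'a with n commuting derivations
d 0, ..., d (n-1).  Multi-indices are functions nat => nat vanishing outside {..<n};
an operator P = sum_alpha P alpha D^alpha is represented by its coefficient
function P :: (nat => nat) => 'a (finite support, supported on multi-indices).\<close>

definition diff_field :: "nat \<Rightarrow> (nat \<Rightarrow> 'a::field \<Rightarrow> 'a) \<Rightarrow> bool" where
  "diff_field n d \<longleftrightarrow>
     (\<forall>i<n. \<forall>a b. d i (a + b) = d i a + d i b \<and> d i (a * b) = d i a * b + a * d i b) \<and>
     (\<forall>i<n. \<forall>j<n. \<forall>a. d i (d j a) = d j (d i a))"

definition multi_idx :: "nat \<Rightarrow> (nat \<Rightarrow> nat) set" where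
  "multi_idx n = {\<alpha>. \<forall>i\<ge>n. \<alpha> i = 0}"

definition mdeg :: "nat \<Rightarrow> (nat \<Rightarrow> nat) \<Rightarrow> nat" where
  "mdeg n \<alpha> = (\<Sum>i<n. \<alpha> i)"

definition dmono :: "(nat \<Rightarrow> 'a \<Rightarrow> 'a) \<Rightarrow> nat \<Rightarrow> (nat \<Rightarrow> nat) \<Rightarrow> 'a \<Rightarrow> 'a" where
  "dmono d n \<gamma> = foldr (\<lambda>i f. (d i ^^ \<gamma> i) \<circ> f) [0..<n] id"

definition mbinom :: "nat \<Rightarrow> (nat \<Rightarrow> nat) \<Rightarrow> (nat \<Rightarrow> nat) \<Rightarrow> nat" where
  "mbinom n \<alpha> \<gamma> = (\<Prod>i<n. \<alpha> i choose \<gamma> i)"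

definition dsupp :: "((nat \<Rightarrow> nat) \<Rightarrow> 'a::zero) \<Rightarrow> (nat \<Rightarrow> nat) set" where
  "dsupp P = {\<alpha>. P \<alpha> \<noteq> 0}"

definition is_diffop :: "nat \<Rightarrow> ((nat \<Rightarrow> nat) \<Rightarrow> 'a::zero) \<Rightarrow> bool" where
  "is_diffop n P \<longleftrightarrow> finite (dsupp P) \<and> dsupp P \<subseteq> multi_idx n"

text \<open>Composition of operators (Leibniz rule):
  (a D^alpha)(b D^beta) = sum_{gamma <= alpha} binom(alpha,gamma) a (D^gamma b) D^(alpha-gamma+beta).
  Addition, subtraction and negation of operators are pointwise on coefficients.\<close>
definition dmul :: "(nat \<Rightarrow> 'a \<Rightarrow> 'a) \<Rightarrow> nat \<Rightarrow> ((nat \<Rightarrow> nat) \<Rightarrow> 'a::field)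
    \<Rightarrow> ((nat \<Rightarrow> nat) \<Rightarrow> 'a) \<Rightarrow> ((nat \<Rightarrow> nat) \<Rightarrow> 'a)" where
  "dmul d n P Q = (\<lambda>\<mu>. \<Sum>\<alpha>\<in>dsupp P. \<Sum>\<beta>\<in>dsupp Q. \<Sum>\<gamma>\<in>{\<gamma>. \<gamma> \<le> \<alpha>}.
      if (\<lambda>i. \<alpha> i - \<gamma> i + \<beta> i) = \<mu> then of_nat (mbinom n \<alpha> \<gamma>) * P \<alpha> * dmono d n \<gamma> (Q \<beta>) else 0)"

definition dcomm :: "(nat \<Rightarrow> 'a \<Rightarrow> 'a) \<Rightarrow> nat \<Rightarrow> ((nat \<Rightarrow> nat) \<Rightarrow> 'a::field)
    \<Rightarrow> ((nat \<Rightarrow> nat) \<Rightarrow> 'a) \<Rightarrow> ((nat \<Rightarrow> nat) \<Rightarrow> 'a)" where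
  "dcomm d n A B = (\<lambda>\<mu>. dmul d n A B \<mu> - dmul d n B A \<mu>)"

text \<open>order of an operator (order of the zero operator taken as 0; its symbol is 0)\<close>
definition dord :: "nat \<Rightarrow> ((nat \<Rightarrow> nat) \<Rightarrow> 'a::zero) \<Rightarrow> nat" where
  "dord n P = Max (insert 0 (mdeg n ` dsupp P))"

text \<open>principal symbol: the coefficients of the top-order part, i.e. the homogeneous
  polynomial sum_{|alpha| = ord P} P alpha xi^alpha, represented by its coefficient function\<close>
definition dsym :: "nat \<Rightarrow> ((nat \<Rightarrow> nat) \<Rightarrow> 'a::zero) \<Rightarrow> ((nat \<Rightarrow> nat) \<Rightarrow> 'a)" where
  "dsym n P = (\<lambda>\<alpha>. if mdeg n \<alpha> = dord n P then P \<alpha> else 0)"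

end

theory Submission
  imports Defs
begin


definition lin :: "(('b \<Rightarrow> 'a::ab_group_add) \<Rightarrow> ('b \<Rightarrow> 'a)) \<Rightarrow> bool" where
  "lin T \<longleftrightarrow> (\<forall>f g. T (\<lambda>v. f v + g v) = (\<lambda>v. T f v + T g v)) \<and>
               (\<forall>f g. T (\<lambda>v. f v - g v) = (\<lambda>v. T f v - T g v))"

lemma lin_add: "lin T \<Longrightarrow> T (\<lambda>v. f v + g v) = (\<lambda>v. T f v + T g v)"
  unfolding lin_def by blast
lemma lin_diff: "lin T \<Longrightarrow> T (\<lambda>v. f v - g v) = (\<lambda>v. T f v - T g v)"
  unfolding lin_def by blast

lemma lin_zero: "lin T \<Longrightarrow> T (\<lambda>v. 0) = (\<lambda>v. 0)"
proof -
  assume "lin T"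
  from lin_diff[OF this, of "\<lambda>v. 0" "\<lambda>v. 0"] show ?thesis by simp
qed

lemma lin_sum: "lin T \<Longrightarrow> T (\<lambda>v. \<Sum>s\<in>S. h s v) = (\<lambda>v. \<Sum>s\<in>S. T (h s) v)"
proof (induction S rule: infinite_finite_induct)
  case (infinite A) then show ?case using lin_zero by simp
next
  case empty then show ?case using lin_zero by simp
next
  case (insert x F)
  have "T (\<lambda>v. \<Sum>s\<in>insert x F. h s v) = T (\<lambda>v. h x v + (\<Sum>s\<in>F. h s v))"
    using insert by simp
  also have "\<dots> = (\<lambda>v. T (h x) v + T (\<lambda>v. \<Sum>s\<in>F. h s v) v)"
    using lin_add[OF insert(4), of "h x" "\<lambda>v. \<Sum>s\<in>F. h s v"] by simp
  finally show ?case using insert by simp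
qed

lemma lin_comp: "lin S \<Longrightarrow> lin T \<Longrightarrow> lin (S \<circ> T)"
  unfolding lin_def by simp

lemma lin_id: "lin id" unfolding lin_def by simp

lemma lin_funpow: "lin T \<Longrightarrow> lin (T ^^ k)"
  by (induction k) (auto simp: lin_id lin_comp)

lemma funpow_commute1: "(\<And>x. f (g x) = g (f x)) \<Longrightarrow> f ((g ^^ b) x) = (g ^^ b) (f x)"
  by (induction b arbitrary: x) auto

lemma funpow_commute: "(\<And>x. f (g x) = g (f x)) \<Longrightarrow> (f ^^ a) ((g ^^ b) x) = (g ^^ b) ((f ^^ a) x)"
proof (induction a arbitrary: x)
  case 0 then show ?case by simp
next
  case (Suc a)
  have "(f ^^ Suc a) ((g ^^ b) x) = f ((f ^^ a) ((g ^^ b) x))" by simp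
  also have "\<dots> = f ((g ^^ b) ((f ^^ a) x))" using Suc by simp
  also have "\<dots> = (g ^^ b) (f ((f ^^ a) x))" using funpow_commute1[of f g] Suc.prems by blast
  finally show ?case by simp
qed

definition Dv :: "(nat \<Rightarrow> 'a \<Rightarrow> 'a) \<Rightarrow> nat \<Rightarrow> ((nat \<Rightarrow> nat) \<Rightarrow> 'a::field) \<Rightarrow> ((nat \<Rightarrow> nat) \<Rightarrow> 'a)" where
  "Dv d i g = (\<lambda>v. d i (g v) + of_nat (Suc (v i)) * g (v(i := Suc (v i))))"

definition Fx :: "(nat \<Rightarrow> 'a \<Rightarrow> 'a) \<Rightarrow> nat list \<Rightarrow> (nat \<Rightarrow> nat) \<Rightarrow> ((nat \<Rightarrow> nat) \<Rightarrow> 'a::field) \<Rightarrow> ((nat \<Rightarrow> nat) \<Rightarrow> 'a)" where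
  "Fx d xs \<alpha> = foldr (\<lambda>i f. (Dv d i ^^ \<alpha> i) \<circ> f) xs id"

definition fx :: "(nat \<Rightarrow> 'a \<Rightarrow> 'a) \<Rightarrow> nat list \<Rightarrow> (nat \<Rightarrow> nat) \<Rightarrow> 'a \<Rightarrow> 'a" where
  "fx d xs \<alpha> = foldr (\<lambda>i f. (d i ^^ \<alpha> i) \<circ> f) xs id"

lemma Fx_Nil[simp]: "Fx d [] \<alpha> = id" by (simp add: Fx_def)
lemma Fx_Cons[simp]: "Fx d (x # xs) \<alpha> = (Dv d x ^^ \<alpha> x) \<circ> Fx d xs \<alpha>" by (simp add: Fx_def)
lemma fx_Nil[simp]: "fx d [] \<alpha> = id" by (simp add: fx_def)
lemma fx_Cons[simp]: "fx d (x # xs) \<alpha> = (d x ^^ \<alpha> x) \<circ> fx d xs \<alpha>" by (simp add: fx_def)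

lemma Fx_cong: "(\<And>i. i \<in> set xs \<Longrightarrow> \<alpha> i = \<beta> i) \<Longrightarrow> Fx d xs \<alpha> = Fx d xs \<beta>"
  by (induction xs) auto
lemma fx_cong: "(\<And>i. i \<in> set xs \<Longrightarrow> \<alpha> i = \<beta> i) \<Longrightarrow> fx d xs \<alpha> = fx d xs \<beta>"
  by (induction xs) auto

lemma dmono_fx: "dmono d n \<gamma> = fx d [0..<n] \<gamma>"
  by (simp add: dmono_def fx_def)

locale dfld =
  fixes n :: nat and d :: "nat \<Rightarrow> 'a::field_char_0 \<Rightarrow> 'a"
  assumes df: "diff_field n d"
begin

lemma d_add: "i < n \<Longrightarrow> d i (a + b) = d i a + d i b"
  using df by (simp add: diff_field_def)
lemma d_mult: "i < n \<Longrightarrow> d i (a * b) = d i a * b + a * d i b"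
  using df by (simp add: diff_field_def)
lemma d_comm: "i < n \<Longrightarrow> j < n \<Longrightarrow> d i (d j a) = d j (d i a)"
  using df by (simp add: diff_field_def)
lemma d_zero: "i < n \<Longrightarrow> d i 0 = 0"
  using d_add[of i 0 0] by simp
lemma d_diff: "i < n \<Longrightarrow> d i (a - b) = d i a - d i b"
  using d_add[of i "a - b" b] by (simp add: algebra_simps)
lemma d_one: "i < n \<Longrightarrow> d i 1 = 0"
  using d_mult[of i 1 1] by simp
lemma d_of_nat: "i < n \<Longrightarrow> d i (of_nat k) = 0"
  by (induction k) (auto simp: d_zero d_add d_one)
lemma d_of_nat_mult: "i < n \<Longrightarrow> d i (of_nat k * a) = of_nat k * d i a"
  by (simp add: d_mult d_of_nat)
lemma dpow_of_nat_mult: "i < n \<Longrightarrow> (d i ^^ j) (of_nat k * a) = of_nat k * (d i ^^ j) a"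
  by (induction j) (auto simp: d_of_nat_mult)
lemma fx_of_nat_mult: "set xs \<subseteq> {..<n} \<Longrightarrow> fx d xs \<gamma> (of_nat k * a) = of_nat k * fx d xs \<gamma> a"
  by (induction xs) (auto simp: dpow_of_nat_mult)

lemma lin_Dv: "i < n \<Longrightarrow> lin (Dv d i)"
  unfolding lin_def Dv_def by (auto simp: d_add d_diff algebra_simps)

lemma lin_Fx: "set xs \<subseteq> {..<n} \<Longrightarrow> lin (Fx d xs \<alpha>)"
  by (induction xs) (auto simp: lin_id lin_comp lin_funpow lin_Dv)

lemma Dv_scal: "i < n \<Longrightarrow> Dv d i (\<lambda>v. b * g v) = (\<lambda>v. d i b * g v + b * Dv d i g v)"
  unfolding Dv_def by (auto simp: d_mult algebra_simps)

lemma Dv_comm: "i < n \<Longrightarrow> j < n \<Longrightarrow> Dv d i (Dv d j g) = Dv d j (Dv d i g)"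
proof (cases "i = j")
  case True then show ?thesis by simp
next
  case False
  assume i: "i < n" and j: "j < n"
  show ?thesis
    unfolding Dv_def using False
    by (auto simp: d_add d_of_nat_mult d_comm[OF i j] i j fun_upd_twist algebra_simps)
qed

lemma Dvpow_comm: "i < n \<Longrightarrow> j < n \<Longrightarrow> (Dv d i ^^ a) ((Dv d j ^^ b) g) = (Dv d j ^^ b) ((Dv d i ^^ a) g)"
  by (rule funpow_commute) (rule Dv_comm)

lemma Dvpow_Fx_comm: "i < n \<Longrightarrow> set xs \<subseteq> {..<n} \<Longrightarrow> (Dv d i ^^ k) (Fx d xs \<alpha> g) = Fx d xs \<alpha> ((Dv d i ^^ k) g)"
proof (induction xs arbitrary: g)
  case Nil then show ?case by simp
next
  case (Cons a xs)
  then have a: "a < n" and s: "set xs \<subseteq> {..<n}" by auto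
  have "(Dv d i ^^ k) ((Dv d a ^^ \<alpha> a) (Fx d xs \<alpha> g)) = (Dv d a ^^ \<alpha> a) ((Dv d i ^^ k) (Fx d xs \<alpha> g))"
    by (rule Dvpow_comm[OF Cons.prems(1) a])
  then show ?case using Cons.IH[OF Cons.prems(1) s] by simp
qed

lemma Fx_Fx: "set xs \<subseteq> {..<n} \<Longrightarrow> Fx d xs \<alpha> (Fx d xs \<beta> g) = Fx d xs (\<lambda>i. \<alpha> i + \<beta> i) g"
proof (induction xs arbitrary: g)
  case Nil then show ?case by simp
next
  case (Cons x xs)
  have x: "x < n" and s: "set xs \<subseteq> {..<n}" using Cons.prems by auto
  have "Fx d (x # xs) \<alpha> (Fx d (x # xs) \<beta> g) = (Dv d x ^^ \<alpha> x) (Fx d xs \<alpha> ((Dv d x ^^ \<beta> x) (Fx d xs \<beta> g)))"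
    by simp
  also have "\<dots> = (Dv d x ^^ \<alpha> x) ((Dv d x ^^ \<beta> x) (Fx d xs \<alpha> (Fx d xs \<beta> g)))"
    using Dvpow_Fx_comm[OF x s] by simp
  also have "\<dots> = (Dv d x ^^ (\<alpha> x + \<beta> x)) (Fx d xs (\<lambda>i. \<alpha> i + \<beta> i) g)"
    using Cons.IH[OF s] by (simp add: funpow_add)
  finally show ?case by simp
qed

end


lemma pascal:
  fixes T :: "nat \<Rightarrow> 'a::comm_ring_1"
  shows "(\<Sum>j\<le>k. of_nat (k choose j) * T (Suc j)) + (\<Sum>j\<le>k. of_nat (k choose j) * T j)
         = (\<Sum>j\<le>Suc k. of_nat (Suc k choose j) * T j)"
proof -
  have "(\<Sum>j\<le>Suc k. of_nat (Suc k choose j) * T j)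
      = T 0 + (\<Sum>j\<le>k. of_nat (Suc k choose Suc j) * T (Suc j))"
    by (subst sum.atMost_Suc_shift) simp
  also have "\<dots> = T 0 + (\<Sum>j\<le>k. of_nat (k choose j) * T (Suc j)) + (\<Sum>j\<le>k. of_nat (k choose Suc j) * T (Suc j))"
    by (simp add: sum.distrib algebra_simps)
  also have "(\<Sum>j\<le>k. of_nat (k choose Suc j) * T (Suc j)) = (\<Sum>j\<le>Suc k. of_nat (k choose j) * T j) - T 0"
  proof -
    have "(\<Sum>j\<le>Suc k. of_nat (k choose j) * T j) = T 0 + (\<Sum>j\<le>k. of_nat (k choose Suc j) * T (Suc j))"
      by (subst sum.atMost_Suc_shift) simp
    then show ?thesis by simp
  qed
  also have "(\<Sum>j\<le>Suc k. of_nat (k choose j) * T j) = (\<Sum>j\<le>k. of_nat (k choose j) * T j)"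
    by (simp add: binomial_eq_0)
  finally show ?thesis by (simp add: algebra_simps)
qed

context dfld begin

lemma leib1: "i < n \<Longrightarrow> (Dv d i ^^ k) (\<lambda>v. b * g v) =
   (\<lambda>v. \<Sum>j\<le>k. of_nat (k choose j) * (d i ^^ j) b * (Dv d i ^^ (k - j)) g v)"
proof (induction k)
  case 0 then show ?case by simp
next
  case (Suc k)
  note i = Suc.prems
  define T where "T j v = (d i ^^ j) b * (Dv d i ^^ (Suc k - j)) g v" for j v
  have "(Dv d i ^^ Suc k) (\<lambda>v. b * g v) = Dv d i ((Dv d i ^^ k) (\<lambda>v. b * g v))" by simp
  also have "\<dots> = Dv d i (\<lambda>v. \<Sum>j\<le>k. (of_nat (k choose j) * (d i ^^ j) b) * (Dv d i ^^ (k - j)) g v)"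
    using Suc.IH[OF i] by simp
  also have "\<dots> = (\<lambda>v. \<Sum>j\<le>k. Dv d i (\<lambda>v. (of_nat (k choose j) * (d i ^^ j) b) * (Dv d i ^^ (k - j)) g v) v)"
    by (rule lin_sum[OF lin_Dv[OF i]])
  also have "\<dots> = (\<lambda>v. \<Sum>j\<le>k. of_nat (k choose j) * T (Suc j) v + of_nat (k choose j) * T j v)"
  proof (rule ext, rule sum.cong[OF refl])
    fix v j assume j: "j \<in> {..k}"
    then have e: "Suc k - j = Suc (k - j)" by auto
    show "Dv d i (\<lambda>v. (of_nat (k choose j) * (d i ^^ j) b) * (Dv d i ^^ (k - j)) g v) v =
          of_nat (k choose j) * T (Suc j) v + of_nat (k choose j) * T j v"
      unfolding T_def Dv_scal[OF i] using e by (simp add: d_of_nat_mult[OF i] algebra_simps)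
  qed
  also have "\<dots> = (\<lambda>v. \<Sum>j\<le>Suc k. of_nat (Suc k choose j) * T j v)"
    using pascal[of k "\<lambda>j. T j _"] by (simp add: sum.distrib)
  finally show ?case unfolding T_def by (simp add: algebra_simps)
qed

end


definition Gs :: "nat list \<Rightarrow> (nat \<Rightarrow> nat) \<Rightarrow> (nat \<Rightarrow> nat) set" where
  "Gs xs \<alpha> = {\<gamma>. (\<forall>i. \<gamma> i \<le> \<alpha> i) \<and> (\<forall>i. i \<notin> set xs \<longrightarrow> \<gamma> i = 0)}"

lemma Gs_Nil: "Gs [] \<alpha> = {\<lambda>_. 0}"
  by (auto simp: Gs_def)

lemma Gs_Cons: "x \<notin> set xs \<Longrightarrow> Gs (x # xs) \<alpha> = (\<lambda>(\<gamma>, j). \<gamma>(x := j)) ` (Gs xs \<alpha> \<times> {..\<alpha> x})"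
proof (intro set_eqI iffI)
  fix \<gamma> assume x: "x \<notin> set xs" and g: "\<gamma> \<in> Gs (x # xs) \<alpha>"
  have m1: "\<gamma>(x := 0) \<in> Gs xs \<alpha>" using g by (auto simp: Gs_def)
  have m2: "\<gamma> x \<in> {..\<alpha> x}" using g by (auto simp: Gs_def)
  show "\<gamma> \<in> (\<lambda>(\<gamma>, j). \<gamma>(x := j)) ` (Gs xs \<alpha> \<times> {..\<alpha> x})"
    by (rule image_eqI[where x="(\<gamma>(x := 0), \<gamma> x)"]) (use m1 m2 in auto)
next
  fix \<gamma> assume "\<gamma> \<in> (\<lambda>(\<gamma>, j). \<gamma>(x := j)) ` (Gs xs \<alpha> \<times> {..\<alpha> x})"
  then show "\<gamma> \<in> Gs (x # xs) \<alpha>" by (auto simp: Gs_def)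
qed

lemma Gs_inj: "x \<notin> set xs \<Longrightarrow> inj_on (\<lambda>(\<gamma>, j). \<gamma>(x := j)) (Gs xs \<alpha> \<times> {..\<alpha> x})"
proof (rule inj_onI, clarsimp)
  fix g1 j1 g2 j2 assume x: "x \<notin> set xs" and "g1 \<in> Gs xs \<alpha>" "g2 \<in> Gs xs \<alpha>"
    and e: "g1(x := j1) = g2(x := j2)"
  then have "g1 x = 0" "g2 x = 0" by (auto simp: Gs_def)
  moreover have "j1 = j2" using fun_cong[OF e, of x] by simp
  ultimately show "g1 = g2 \<and> j1 = j2" using e
    by (metis fun_upd_triv fun_upd_upd)
qed

lemma finite_Gs: "distinct xs \<Longrightarrow> finite (Gs xs \<alpha>)"
  by (induction xs) (auto simp: Gs_Nil Gs_Cons)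

context dfld begin

lemma leib: "distinct xs \<Longrightarrow> set xs \<subseteq> {..<n} \<Longrightarrow> Fx d xs \<alpha> (\<lambda>v. b * g v) =
  (\<lambda>v. \<Sum>\<gamma>\<in>Gs xs \<alpha>. of_nat (\<Prod>i\<in>set xs. \<alpha> i choose \<gamma> i) * fx d xs \<gamma> b * Fx d xs (\<lambda>i. \<alpha> i - \<gamma> i) g v)"
proof (induction xs)
  case Nil then show ?case by (simp add: Gs_Nil)
next
  case (Cons x xs)
  have x: "x < n" and s: "set xs \<subseteq> {..<n}" and xn: "x \<notin> set xs" and dx: "distinct xs"
    using Cons.prems by auto
  define c where "c \<gamma> = (\<Prod>i\<in>set xs. \<alpha> i choose \<gamma> i)" for \<gamma>
  define H where "H \<gamma> v = of_nat (\<Prod>i\<in>set (x # xs). \<alpha> i choose \<gamma> i) * fx d (x # xs) \<gamma> b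
      * Fx d (x # xs) (\<lambda>i. \<alpha> i - \<gamma> i) g v" for \<gamma> v
  have "Fx d (x # xs) \<alpha> (\<lambda>v. b * g v) = (Dv d x ^^ \<alpha> x) (Fx d xs \<alpha> (\<lambda>v. b * g v))" by simp
  also have "\<dots> = (Dv d x ^^ \<alpha> x) (\<lambda>v. \<Sum>\<gamma>\<in>Gs xs \<alpha>. (of_nat (c \<gamma>) * fx d xs \<gamma> b) * Fx d xs (\<lambda>i. \<alpha> i - \<gamma> i) g v)"
    using Cons.IH[OF dx s] by (simp add: c_def mult.assoc)
  also have "\<dots> = (\<lambda>v. \<Sum>\<gamma>\<in>Gs xs \<alpha>. (Dv d x ^^ \<alpha> x) (\<lambda>v. (of_nat (c \<gamma>) * fx d xs \<gamma> b) * Fx d xs (\<lambda>i. \<alpha> i - \<gamma> i) g v) v)"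
    by (rule lin_sum[OF lin_funpow[OF lin_Dv[OF x]]])
  also have "\<dots> = (\<lambda>v. \<Sum>\<gamma>\<in>Gs xs \<alpha>. \<Sum>j\<le>\<alpha> x. H (\<gamma>(x := j)) v)"
  proof (rule ext, rule sum.cong[OF refl])
    fix v \<gamma> assume g: "\<gamma> \<in> Gs xs \<alpha>"
    show "(Dv d x ^^ \<alpha> x) (\<lambda>v. (of_nat (c \<gamma>) * fx d xs \<gamma> b) * Fx d xs (\<lambda>i. \<alpha> i - \<gamma> i) g v) v
       = (\<Sum>j\<le>\<alpha> x. H (\<gamma>(x := j)) v)"
      unfolding leib1[OF x]
    proof (rule sum.cong[OF refl])
      fix j assume j: "j \<in> {..\<alpha> x}"
      have f1: "fx d xs (\<gamma>(x := j)) = fx d xs \<gamma>" by (rule fx_cong) (use xn in auto)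
      have f2: "Fx d xs (\<lambda>i. \<alpha> i - (\<gamma>(x := j)) i) = Fx d xs (\<lambda>i. \<alpha> i - \<gamma> i)"
        by (rule Fx_cong) (use xn in auto)
      have f3: "(\<Prod>i\<in>set (x # xs). \<alpha> i choose (\<gamma>(x := j)) i) = (\<alpha> x choose j) * c \<gamma>"
      proof -
        have "(\<Prod>i\<in>set (x # xs). \<alpha> i choose (\<gamma>(x := j)) i) = (\<alpha> x choose j) * (\<Prod>i\<in>set xs. \<alpha> i choose (\<gamma>(x := j)) i)"
          using xn by simp
        also have "(\<Prod>i\<in>set xs. \<alpha> i choose (\<gamma>(x := j)) i) = c \<gamma>"
          unfolding c_def by (rule prod.cong) (use xn in auto)
        finally show ?thesis .
      qed
      have f4: "Fx d (x # xs) (\<lambda>i. \<alpha> i - (\<gamma>(x := j)) i) = (Dv d x ^^ (\<alpha> x - j)) \<circ> Fx d xs (\<lambda>i. \<alpha> i - \<gamma> i)"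
        using f2 by simp
      show "of_nat (\<alpha> x choose j) * (d x ^^ j) (of_nat (c \<gamma>) * fx d xs \<gamma> b) *
            (Dv d x ^^ (\<alpha> x - j)) (Fx d xs (\<lambda>i. \<alpha> i - \<gamma> i) g) v = H (\<gamma>(x := j)) v"
      proof -
        have "H (\<gamma>(x := j)) v = of_nat ((\<alpha> x choose j) * c \<gamma>) * (d x ^^ j) (fx d xs \<gamma> b)
            * (Dv d x ^^ (\<alpha> x - j)) (Fx d xs (\<lambda>i. \<alpha> i - \<gamma> i) g) v"
          unfolding H_def f3 f4 using f1 by simp
        then show ?thesis by (simp only: dpow_of_nat_mult[OF x] of_nat_mult mult_ac)
      qed
    qed
  qed
  also have "\<dots> = (\<lambda>v. \<Sum>p\<in>Gs xs \<alpha> \<times> {..\<alpha> x}. H ((\<lambda>(\<gamma>, j). \<gamma>(x := j)) p) v)"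
    by (simp add: sum.cartesian_product case_prod_unfold)
  also have "\<dots> = (\<lambda>v. \<Sum>\<gamma>\<in>Gs (x # xs) \<alpha>. H \<gamma> v)"
    unfolding Gs_Cons[OF xn] by (subst sum.reindex[OF Gs_inj[OF xn]]) simp
  finally show ?case unfolding H_def .
qed

end


definition act :: "(nat \<Rightarrow> 'a \<Rightarrow> 'a) \<Rightarrow> nat \<Rightarrow> ((nat \<Rightarrow> nat) \<Rightarrow> 'a::field) \<Rightarrow> ((nat \<Rightarrow> nat) \<Rightarrow> 'a) \<Rightarrow> ((nat \<Rightarrow> nat) \<Rightarrow> 'a)" where
  "act d n P g = (\<lambda>v. \<Sum>\<alpha>\<in>dsupp P. P \<alpha> * Fx d [0..<n] \<alpha> g v)"

lemma act_sup: "finite A \<Longrightarrow> dsupp P \<subseteq> A \<Longrightarrow> act d n P g = (\<lambda>v. \<Sum>\<alpha>\<in>A. P \<alpha> * Fx d [0..<n] \<alpha> g v)"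
  unfolding act_def by (intro ext sum.mono_neutral_left) (auto simp: dsupp_def)

lemma dsupp_add: "dsupp (\<lambda>\<mu>. (P::_\<Rightarrow>'a::ab_group_add) \<mu> + Q \<mu>) \<subseteq> dsupp P \<union> dsupp Q"
  by (auto simp: dsupp_def)
lemma dsupp_diff: "dsupp (\<lambda>\<mu>. (P::_\<Rightarrow>'a::ab_group_add) \<mu> - Q \<mu>) \<subseteq> dsupp P \<union> dsupp Q"
  by (auto simp: dsupp_def)
lemma dsupp_neg: "dsupp (\<lambda>\<mu>. - (P::_\<Rightarrow>'a::ab_group_add) \<mu>) = dsupp P"
  by (auto simp: dsupp_def)

lemma diffop_add: "is_diffop n (P::_\<Rightarrow>'a::ab_group_add) \<Longrightarrow> is_diffop n Q \<Longrightarrow> is_diffop n (\<lambda>\<mu>. P \<mu> + Q \<mu>)"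
  unfolding is_diffop_def using dsupp_add[of P Q] by (meson finite_UnI finite_subset le_sup_iff subset_trans)
lemma diffop_diff: "is_diffop n (P::_\<Rightarrow>'a::ab_group_add) \<Longrightarrow> is_diffop n Q \<Longrightarrow> is_diffop n (\<lambda>\<mu>. P \<mu> - Q \<mu>)"
  unfolding is_diffop_def using dsupp_diff[of P Q] by (meson finite_UnI finite_subset le_sup_iff subset_trans)
lemma diffop_neg: "is_diffop n (P::_\<Rightarrow>'a::ab_group_add) \<Longrightarrow> is_diffop n (\<lambda>\<mu>. - P \<mu>)"
  unfolding is_diffop_def dsupp_neg by simp

lemma act_add: "is_diffop n P \<Longrightarrow> is_diffop n Q \<Longrightarrow>
   act d n (\<lambda>\<mu>. P \<mu> + Q \<mu>) g = (\<lambda>v. act d n P g v + act d n Q g v)"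
proof -
  assume p: "is_diffop n P" and q: "is_diffop n Q"
  let ?A = "dsupp P \<union> dsupp Q"
  have f: "finite ?A" using p q by (auto simp: is_diffop_def)
  have s: "dsupp (\<lambda>\<mu>. P \<mu> + Q \<mu>) \<subseteq> ?A" by (auto simp: dsupp_def)
  have sP: "dsupp P \<subseteq> ?A" and sQ: "dsupp Q \<subseteq> ?A" by auto
  show ?thesis
    unfolding act_sup[OF f s] act_sup[OF f sP] act_sup[OF f sQ]
    by (auto simp: sum.distrib algebra_simps)
qed

lemma act_diff: "is_diffop n P \<Longrightarrow> is_diffop n Q \<Longrightarrow>
   act d n (\<lambda>\<mu>. P \<mu> - Q \<mu>) g = (\<lambda>v. act d n P g v - act d n Q g v)"
proof -
  assume p: "is_diffop n P" and q: "is_diffop n Q"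
  let ?A = "dsupp P \<union> dsupp Q"
  have f: "finite ?A" using p q by (auto simp: is_diffop_def)
  have s: "dsupp (\<lambda>\<mu>. P \<mu> - Q \<mu>) \<subseteq> ?A" by (auto simp: dsupp_def)
  have sP: "dsupp P \<subseteq> ?A" and sQ: "dsupp Q \<subseteq> ?A" by auto
  show ?thesis
    unfolding act_sup[OF f s] act_sup[OF f sP] act_sup[OF f sQ]
    by (auto simp: sum_subtractf algebra_simps)
qed

lemma act_neg: "act d n (\<lambda>\<mu>. - P \<mu>) g = (\<lambda>v. - act d n P g v)"
  unfolding act_def dsupp_def by (simp add: sum_negf)

lemma Gs_upt: "\<alpha> \<in> multi_idx n \<Longrightarrow> Gs [0..<n] \<alpha> = {\<gamma>. \<gamma> \<le> \<alpha>}"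
  unfolding Gs_def multi_idx_def le_fun_def by auto (metis le_zero_eq not_less)

lemma mbinom_upt: "mbinom n \<alpha> \<gamma> = (\<Prod>i\<in>set [0..<n]. \<alpha> i choose \<gamma> i)"
  by (simp add: mbinom_def atLeast0LessThan)

lemma finite_le: "\<alpha> \<in> multi_idx n \<Longrightarrow> finite {\<gamma>. \<gamma> \<le> \<alpha>}"
  using finite_Gs[of "[0..<n]" \<alpha>] Gs_upt by simp

context dfld begin

lemma lin_act: "lin (act d n P)"
proof -
  have l: "lin (Fx d [0..<n] \<alpha>)" for \<alpha> by (rule lin_Fx) auto
  show ?thesis unfolding lin_def act_def
    by (auto simp: lin_add[OF l] lin_diff[OF l] sum.distrib sum_subtractf algebra_simps)
qed

lemma act_dmul:
  assumes p: "is_diffop n P" and q: "is_diffop n Q"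
  shows "is_diffop n (dmul d n P Q) \<and> act d n (dmul d n P Q) g = act d n P (act d n Q g)"
proof -
  let ?A = "dsupp P" and ?B = "dsupp Q"
  define E where "E \<alpha> = {\<gamma>::nat\<Rightarrow>nat. \<gamma> \<le> \<alpha>}" for \<alpha>
  define e where "e \<alpha> \<beta> \<gamma> = (\<lambda>i::nat. \<alpha> i - \<gamma> i + \<beta> i)" for \<alpha> \<beta> \<gamma> :: "nat \<Rightarrow> nat"
  define T where "T \<alpha> \<beta> \<gamma> = of_nat (mbinom n \<alpha> \<gamma>) * P \<alpha> * dmono d n \<gamma> (Q \<beta>)" for \<alpha> \<beta> \<gamma>
  define F where "F \<alpha> = Fx d [0..<n] \<alpha>" for \<alpha>
  define I where "I = Sigma ?A (\<lambda>\<alpha>. Sigma ?B (\<lambda>\<beta>. E \<alpha>))"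
  define M where "M = (\<lambda>(\<alpha>, \<beta>, \<gamma>). e \<alpha> \<beta> \<gamma>) ` I"
  have fA: "finite ?A" and fB: "finite ?B" and sA: "?A \<subseteq> multi_idx n" and sB: "?B \<subseteq> multi_idx n"
    using p q by (auto simp: is_diffop_def)
  have fE: "\<alpha> \<in> ?A \<Longrightarrow> finite (E \<alpha>)" for \<alpha> unfolding E_def using sA finite_le by blast
  have fI: "finite I" unfolding I_def using fA fB fE by (auto intro!: finite_SigmaI)
  have fM: "finite M" unfolding M_def using fI by simp
  have dm: "dmul d n P Q \<mu> = (\<Sum>\<alpha>\<in>?A. \<Sum>\<beta>\<in>?B. \<Sum>\<gamma>\<in>E \<alpha>. if e \<alpha> \<beta> \<gamma> = \<mu> then T \<alpha> \<beta> \<gamma> else 0)" for \<mu>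
    unfolding dmul_def E_def e_def T_def by simp
  have sM: "dsupp (dmul d n P Q) \<subseteq> M"
  proof
    fix \<mu> assume "\<mu> \<in> dsupp (dmul d n P Q)"
    then have "dmul d n P Q \<mu> \<noteq> 0" by (simp add: dsupp_def)
    then have nz1: "(\<Sum>\<alpha>\<in>?A. \<Sum>\<beta>\<in>?B. \<Sum>\<gamma>\<in>E \<alpha>. if e \<alpha> \<beta> \<gamma> = \<mu> then T \<alpha> \<beta> \<gamma> else 0) \<noteq> 0"
      unfolding dm .
    obtain \<alpha> where a: "\<alpha> \<in> ?A" and
      nz2: "(\<Sum>\<beta>\<in>?B. \<Sum>\<gamma>\<in>E \<alpha>. if e \<alpha> \<beta> \<gamma> = \<mu> then T \<alpha> \<beta> \<gamma> else 0) \<noteq> 0"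
      by (rule sum.not_neutral_contains_not_neutral[OF nz1])
    obtain \<beta> where b: "\<beta> \<in> ?B" and
      nz3: "(\<Sum>\<gamma>\<in>E \<alpha>. if e \<alpha> \<beta> \<gamma> = \<mu> then T \<alpha> \<beta> \<gamma> else 0) \<noteq> 0"
      by (rule sum.not_neutral_contains_not_neutral[OF nz2])
    obtain \<gamma> where c: "\<gamma> \<in> E \<alpha>" and nz4: "(if e \<alpha> \<beta> \<gamma> = \<mu> then T \<alpha> \<beta> \<gamma> else 0) \<noteq> 0"
      by (rule sum.not_neutral_contains_not_neutral[OF nz3])
    have "e \<alpha> \<beta> \<gamma> = \<mu>" using nz4 by (simp split: if_splits)
    then have "\<alpha> \<in> ?A" "\<beta> \<in> ?B" "\<gamma> \<in> E \<alpha>" "e \<alpha> \<beta> \<gamma> = \<mu>" using a b c by auto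
    then show "\<mu> \<in> M" unfolding M_def I_def by force
  qed
  have Mm: "M \<subseteq> multi_idx n"
    unfolding M_def I_def e_def using sA sB by (auto simp: multi_idx_def)
  have diffop: "is_diffop n (dmul d n P Q)"
    unfolding is_diffop_def using sM Mm fM finite_subset by blast
  have "act d n (dmul d n P Q) g v = act d n P (act d n Q g) v" for v
  proof -
    have "act d n (dmul d n P Q) g v = (\<Sum>\<mu>\<in>M. dmul d n P Q \<mu> * F \<mu> g v)"
      using act_sup[OF fM sM] F_def by simp
    also have "\<dots> = (\<Sum>\<mu>\<in>M. \<Sum>\<alpha>\<in>?A. \<Sum>\<beta>\<in>?B. \<Sum>\<gamma>\<in>E \<alpha>. if e \<alpha> \<beta> \<gamma> = \<mu> then T \<alpha> \<beta> \<gamma> * F \<mu> g v else 0)"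
      unfolding dm sum_distrib_right by (intro sum.cong refl) simp
    also have "\<dots> = (\<Sum>\<alpha>\<in>?A. \<Sum>\<mu>\<in>M. \<Sum>\<beta>\<in>?B. \<Sum>\<gamma>\<in>E \<alpha>. if e \<alpha> \<beta> \<gamma> = \<mu> then T \<alpha> \<beta> \<gamma> * F \<mu> g v else 0)"
      by (rule sum.swap)
    also have "\<dots> = (\<Sum>\<alpha>\<in>?A. \<Sum>\<beta>\<in>?B. \<Sum>\<mu>\<in>M. \<Sum>\<gamma>\<in>E \<alpha>. if e \<alpha> \<beta> \<gamma> = \<mu> then T \<alpha> \<beta> \<gamma> * F \<mu> g v else 0)"
      by (rule sum.cong[OF refl], rule sum.swap)
    also have "\<dots> = (\<Sum>\<alpha>\<in>?A. \<Sum>\<beta>\<in>?B. \<Sum>\<gamma>\<in>E \<alpha>. \<Sum>\<mu>\<in>M. if e \<alpha> \<beta> \<gamma> = \<mu> then T \<alpha> \<beta> \<gamma> * F \<mu> g v else 0)"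
      by (rule sum.cong[OF refl], rule sum.cong[OF refl], rule sum.swap)
    also have "\<dots> = (\<Sum>\<alpha>\<in>?A. \<Sum>\<beta>\<in>?B. \<Sum>\<gamma>\<in>E \<alpha>. T \<alpha> \<beta> \<gamma> * F (e \<alpha> \<beta> \<gamma>) g v)"
    proof (intro sum.cong refl)
      fix \<alpha> \<beta> \<gamma> assume "\<alpha> \<in> ?A" "\<beta> \<in> ?B" "\<gamma> \<in> E \<alpha>"
      then have "e \<alpha> \<beta> \<gamma> \<in> M" unfolding M_def I_def by force
      then show "(\<Sum>\<mu>\<in>M. if e \<alpha> \<beta> \<gamma> = \<mu> then T \<alpha> \<beta> \<gamma> * F \<mu> g v else 0) = T \<alpha> \<beta> \<gamma> * F (e \<alpha> \<beta> \<gamma>) g v"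
        using fM by (simp add: sum.delta)
    qed
    also have "\<dots> = act d n P (act d n Q g) v"
    proof -
      have "act d n P (act d n Q g) v = (\<Sum>\<alpha>\<in>?A. P \<alpha> * F \<alpha> (\<lambda>v. \<Sum>\<beta>\<in>?B. Q \<beta> * F \<beta> g v) v)"
        unfolding act_def F_def ..
      also have "\<dots> = (\<Sum>\<alpha>\<in>?A. \<Sum>\<beta>\<in>?B. \<Sum>\<gamma>\<in>E \<alpha>. T \<alpha> \<beta> \<gamma> * F (e \<alpha> \<beta> \<gamma>) g v)"
      proof (rule sum.cong[OF refl])
        fix \<alpha> assume a: "\<alpha> \<in> ?A"
        have l: "lin (F \<alpha>)" unfolding F_def by (rule lin_Fx) auto
        have "P \<alpha> * F \<alpha> (\<lambda>v. \<Sum>\<beta>\<in>?B. Q \<beta> * F \<beta> g v) v = P \<alpha> * (\<Sum>\<beta>\<in>?B. F \<alpha> (\<lambda>v. Q \<beta> * F \<beta> g v) v)"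
          by (simp add: lin_sum[OF l])
        also have "\<dots> = (\<Sum>\<beta>\<in>?B. \<Sum>\<gamma>\<in>E \<alpha>. T \<alpha> \<beta> \<gamma> * F (e \<alpha> \<beta> \<gamma>) g v)"
          unfolding sum_distrib_left
        proof (rule sum.cong[OF refl])
          fix \<beta> assume b: "\<beta> \<in> ?B"
          have "F \<alpha> (\<lambda>v. Q \<beta> * F \<beta> g v) v = (\<Sum>\<gamma>\<in>E \<alpha>. of_nat (mbinom n \<alpha> \<gamma>) * dmono d n \<gamma> (Q \<beta>) * F (e \<alpha> \<beta> \<gamma>) g v)"
          proof -
            have sub: "set [0..<n] \<subseteq> {..<n}" by auto
            have L: "F \<alpha> (\<lambda>v. Q \<beta> * F \<beta> g v) = (\<lambda>v. \<Sum>\<gamma>\<in>Gs [0..<n] \<alpha>.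
               of_nat (\<Prod>i\<in>set [0..<n]. \<alpha> i choose \<gamma> i) * fx d [0..<n] \<gamma> (Q \<beta>) * Fx d [0..<n] (\<lambda>i. \<alpha> i - \<gamma> i) (F \<beta> g) v)"
              unfolding F_def by (rule leib[OF distinct_upt sub])
            have FF: "Fx d [0..<n] (\<lambda>i. \<alpha> i - \<gamma> i) (F \<beta> g) = F (e \<alpha> \<beta> \<gamma>) g" for \<gamma>
              unfolding F_def e_def by (rule Fx_Fx[OF sub])
            show ?thesis
              unfolding L FF Gs_upt[OF subsetD[OF sA a]] E_def mbinom_upt dmono_fx ..
          qed
          then show "P \<alpha> * F \<alpha> (\<lambda>v. Q \<beta> * F \<beta> g v) v = (\<Sum>\<gamma>\<in>E \<alpha>. T \<alpha> \<beta> \<gamma> * F (e \<alpha> \<beta> \<gamma>) g v)"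
            unfolding T_def by (simp add: sum_distrib_left mult_ac)
        qed
        finally show "P \<alpha> * F \<alpha> (\<lambda>v. \<Sum>\<beta>\<in>?B. Q \<beta> * F \<beta> g v) v = (\<Sum>\<beta>\<in>?B. \<Sum>\<gamma>\<in>E \<alpha>. T \<alpha> \<beta> \<gamma> * F (e \<alpha> \<beta> \<gamma>) g v)" .
      qed
      finally show ?thesis by simp
    qed
    finally show ?thesis .
  qed
  then show ?thesis using diffop by blast
qed

end


context dfld begin

definition cst :: "((nat \<Rightarrow> nat) \<Rightarrow> 'a) \<Rightarrow> bool" where
  "cst g \<longleftrightarrow> (\<forall>i<n. \<forall>v. d i (g v) = 0)"

lemma Dv_cst: "i < n \<Longrightarrow> cst g \<Longrightarrow> Dv d i g = (\<lambda>v. of_nat (Suc (v i)) * g (v(i := Suc (v i))))"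
  unfolding Dv_def cst_def by simp

lemma cst_Dv: "i < n \<Longrightarrow> cst g \<Longrightarrow> cst (Dv d i g)"
proof -
  assume i: "i < n" and c: "cst g"
  show "cst (Dv d i g)" unfolding cst_def Dv_cst[OF i c]
  proof (intro allI impI)
    fix j v assume j: "j < n"
    show "d j (of_nat (Suc (v i)) * g (v(i := Suc (v i)))) = 0"
      using c j by (simp only: d_of_nat_mult[OF j]) (simp add: cst_def)
  qed
qed

lemma cst_Dvpow: "i < n \<Longrightarrow> cst g \<Longrightarrow> cst ((Dv d i ^^ k) g)"
  by (induction k) (auto simp: cst_Dv)

lemma cst_Fx: "set xs \<subseteq> {..<n} \<Longrightarrow> cst g \<Longrightarrow> cst (Fx d xs \<beta> g)"
  by (induction xs) (auto simp: cst_Dvpow)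

lemma Dvpow_cst: "i < n \<Longrightarrow> cst g \<Longrightarrow>
   (Dv d i ^^ k) g v = of_nat (\<Prod>t\<in>{1..k}. v i + t) * g (v(i := v i + k))"
proof (induction k arbitrary: g v)
  case 0 then show ?case by simp
next
  case (Suc k)
  have c: "cst (Dv d i g)" using cst_Dv Suc.prems by blast
  have "(Dv d i ^^ Suc k) g v = (Dv d i ^^ k) (Dv d i g) v" by (simp only: funpow_Suc_right comp_apply)
  also have "\<dots> = of_nat (\<Prod>t\<in>{1..k}. v i + t) * Dv d i g (v(i := v i + k))"
    by (rule Suc.IH[OF Suc.prems(1) c])
  also have "\<dots> = of_nat (\<Prod>t\<in>{1..k}. v i + t) * (of_nat (v i + Suc k) * g (v(i := v i + Suc k)))"
    by (simp only: Dv_cst[OF Suc.prems] fun_upd_same fun_upd_upd add_Suc_right)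
  also have "\<dots> = of_nat (\<Prod>t\<in>{1..Suc k}. v i + t) * g (v(i := v i + Suc k))"
  proof -
    have "(\<Prod>t\<in>{1..Suc k}. v i + t) = (v i + Suc k) * (\<Prod>t\<in>{1..k}. v i + t)"
      by (rule prod.nat_ivl_Suc') simp
    then show ?thesis by (simp only: of_nat_mult mult_ac)
  qed
  finally show ?case .
qed

lemma Fx_cst: "distinct xs \<Longrightarrow> set xs \<subseteq> {..<n} \<Longrightarrow> cst g \<Longrightarrow>
   Fx d xs \<beta> g v = of_nat (\<Prod>i\<in>set xs. \<Prod>t\<in>{1..\<beta> i}. v i + t) * g (\<lambda>i. if i \<in> set xs then v i + \<beta> i else v i)"
proof (induction xs arbitrary: v)
  case Nil then show ?case by simp
next
  case (Cons x xs)
  have x: "x < n" and s: "set xs \<subseteq> {..<n}" and xn: "x \<notin> set xs" and dx: "distinct xs"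
    using Cons.prems by auto
  have c: "cst (Fx d xs \<beta> g)" using cst_Fx[OF s Cons.prems(3)] .
  let ?w = "v(x := v x + \<beta> x)"
  have "Fx d (x # xs) \<beta> g v = (Dv d x ^^ \<beta> x) (Fx d xs \<beta> g) v" by simp
  also have "\<dots> = of_nat (\<Prod>t\<in>{1..\<beta> x}. v x + t) * Fx d xs \<beta> g ?w"
    using Dvpow_cst[OF x c] by simp
  also have "\<dots> = of_nat (\<Prod>t\<in>{1..\<beta> x}. v x + t) * (of_nat (\<Prod>i\<in>set xs. \<Prod>t\<in>{1..\<beta> i}. ?w i + t)
      * g (\<lambda>i. if i \<in> set xs then ?w i + \<beta> i else ?w i))"
    using Cons.IH[OF dx s Cons.prems(3)] by simp
  also have "(\<Prod>i\<in>set xs. \<Prod>t\<in>{1..\<beta> i}. ?w i + t) = (\<Prod>i\<in>set xs. \<Prod>t\<in>{1..\<beta> i}. v i + t)"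
    by (rule prod.cong) (use xn in auto)
  also have "(\<lambda>i. if i \<in> set xs then ?w i + \<beta> i else ?w i) = (\<lambda>i. if i \<in> set (x # xs) then v i + \<beta> i else v i)"
    using xn by auto
  finally show ?case using xn by (simp add: mult_ac)
qed

definition Kf :: "(nat \<Rightarrow> nat) \<Rightarrow> nat" where
  "Kf \<beta> = (\<Prod>i\<in>set [0..<n]. \<Prod>t\<in>{1..\<beta> i}. (0::nat) + t)"

lemma Kf_nz: "Kf \<beta> \<noteq> 0"
  unfolding Kf_def by (simp add: prod_zero_iff)

lemma cst_delta: "cst (\<lambda>v. if v = \<alpha> then 1 else 0)"
  unfolding cst_def by (auto simp: d_one d_zero)

lemma act_delta:
  assumes p: "is_diffop n P"
  shows "act d n P (\<lambda>v. if v = \<alpha> then 1 else 0) (\<lambda>_. 0) = P \<alpha> * of_nat (Kf \<alpha>)"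
proof -
  have fp: "finite (dsupp P)" and sp: "dsupp P \<subseteq> multi_idx n" using p by (auto simp: is_diffop_def)
  have e: "Fx d [0..<n] \<beta> (\<lambda>v. if v = \<alpha> then 1 else 0) (\<lambda>_. 0) = (if \<beta> = \<alpha> then of_nat (Kf \<beta>) else 0)"
    if b: "\<beta> \<in> multi_idx n" for \<beta>
  proof -
    have fe: "(\<lambda>i. if i \<in> set [0..<n] then (0::nat) + \<beta> i else 0) = \<beta>"
      using b by (auto simp: multi_idx_def)
    have h: "Fx d [0..<n] \<beta> (\<lambda>v. if v = \<alpha> then 1 else 0) (\<lambda>_. 0) = of_nat (Kf \<beta>) *
       (\<lambda>v. if v = \<alpha> then 1 else 0) (\<lambda>i. if i \<in> set [0..<n] then (0::nat) + \<beta> i else 0)"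
      unfolding Kf_def by (rule Fx_cst[OF distinct_upt _ cst_delta]) auto
    show ?thesis using h unfolding fe by simp
  qed
  have "act d n P (\<lambda>v. if v = \<alpha> then 1 else 0) (\<lambda>_. 0) = (\<Sum>\<beta>\<in>dsupp P. if \<beta> = \<alpha> then P \<alpha> * of_nat (Kf \<alpha>) else 0)"
    unfolding act_def by (rule sum.cong) (use e sp in auto)
  also have "\<dots> = P \<alpha> * of_nat (Kf \<alpha>)"
    using fp by (simp add: sum.delta') (auto simp: dsupp_def)
  finally show ?thesis .
qed

lemma faithful:
  assumes "is_diffop n P" "is_diffop n Q" "\<And>g. act d n P g = act d n Q g"
  shows "P = Q"
proof
  fix \<alpha>
  have "P \<alpha> * of_nat (Kf \<alpha>) = Q \<alpha> * of_nat (Kf \<alpha>)"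
    using act_delta[OF assms(1), of \<alpha>] act_delta[OF assms(2), of \<alpha>] assms(3) by metis
  then show "P \<alpha> = Q \<alpha>" using Kf_nz[of \<alpha>] by (metis mult_cancel_right of_nat_eq_0_iff)
qed

end


definition prec :: "nat \<Rightarrow> (nat \<Rightarrow> nat) \<Rightarrow> (nat \<Rightarrow> nat) \<Rightarrow> bool" where
  "prec n \<alpha> \<beta> \<longleftrightarrow> (\<exists>k<n. \<alpha> k < \<beta> k \<and> (\<forall>i. k < i \<and> i < n \<longrightarrow> \<alpha> i = \<beta> i))"

lemma prec_irrefl: "\<not> prec n \<alpha> \<alpha>"
  unfolding prec_def by auto

lemma prec_trans: "prec n \<alpha> \<beta> \<Longrightarrow> prec n \<beta> \<gamma> \<Longrightarrow> prec n \<alpha> \<gamma>"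
proof -
  assume "prec n \<alpha> \<beta>" "prec n \<beta> \<gamma>"
  then obtain k1 k2 where k1: "k1 < n" "\<alpha> k1 < \<beta> k1" "\<forall>i. k1 < i \<and> i < n \<longrightarrow> \<alpha> i = \<beta> i"
    and k2: "k2 < n" "\<beta> k2 < \<gamma> k2" "\<forall>i. k2 < i \<and> i < n \<longrightarrow> \<beta> i = \<gamma> i"
    unfolding prec_def by blast
  show "prec n \<alpha> \<gamma>" unfolding prec_def
  proof (cases k1 k2 rule: linorder_cases)
    case less then show "\<exists>k<n. \<alpha> k < \<gamma> k \<and> (\<forall>i. k < i \<and> i < n \<longrightarrow> \<alpha> i = \<gamma> i)"
      using k1 k2 by (intro exI[of _ k2]) auto
  next
    case equal then show "\<exists>k<n. \<alpha> k < \<gamma> k \<and> (\<forall>i. k < i \<and> i < n \<longrightarrow> \<alpha> i = \<gamma> i)"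
      using k1 k2 by (intro exI[of _ k2]) auto
  next
    case greater then show "\<exists>k<n. \<alpha> k < \<gamma> k \<and> (\<forall>i. k < i \<and> i < n \<longrightarrow> \<alpha> i = \<gamma> i)"
      using k1 k2 by (intro exI[of _ k1]) auto
  qed
qed

lemma prec_add1: "prec n \<alpha> \<beta> \<Longrightarrow> prec n (\<lambda>i. \<alpha> i + \<gamma> i) (\<lambda>i. \<beta> i + \<gamma> i)"
  unfolding prec_def by auto
lemma prec_add2: "prec n \<alpha> \<beta> \<Longrightarrow> prec n (\<lambda>i. \<gamma> i + \<alpha> i) (\<lambda>i. \<gamma> i + \<beta> i)"
  unfolding prec_def by auto

lemma prec_total: "\<alpha> \<in> multi_idx n \<Longrightarrow> \<beta> \<in> multi_idx n \<Longrightarrow> \<alpha> \<noteq> \<beta> \<Longrightarrow> prec n \<alpha> \<beta> \<or> prec n \<beta> \<alpha>"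
proof -
  assume a: "\<alpha> \<in> multi_idx n" and b: "\<beta> \<in> multi_idx n" and ne: "\<alpha> \<noteq> \<beta>"
  define S where "S = {i. i < n \<and> \<alpha> i \<noteq> \<beta> i}"
  have fS: "finite S" unfolding S_def by simp
  have "S \<noteq> {}"
  proof
    assume "S = {}"
    then have "\<alpha> i = \<beta> i" for i
      using a b unfolding S_def multi_idx_def by (cases "i < n") auto
    then show False using ne by auto
  qed
  define k where "k = Max S"
  have kS: "k \<in> S" using fS \<open>S \<noteq> {}\<close> k_def by simp
  have up: "\<forall>i. k < i \<and> i < n \<longrightarrow> \<alpha> i = \<beta> i"
  proof (intro allI impI)
    fix i assume "k < i \<and> i < n"
    then show "\<alpha> i = \<beta> i" using Max_ge[OF fS, of i] k_def unfolding S_def by fastforce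
  qed
  have "k < n" "\<alpha> k \<noteq> \<beta> k" using kS S_def by auto
  then show ?thesis unfolding prec_def using up
    by (metis linorder_neqE_nat)
qed

lemma prec_max: "finite A \<Longrightarrow> A \<noteq> {} \<Longrightarrow> A \<subseteq> multi_idx n \<Longrightarrow> \<exists>a\<in>A. \<forall>b\<in>A. b \<noteq> a \<longrightarrow> prec n b a"
proof (induction A rule: finite_ne_induct)
  case (singleton x) then show ?case by auto
next
  case (insert x F)
  then obtain a where a: "a \<in> F" "\<forall>b\<in>F. b \<noteq> a \<longrightarrow> prec n b a" by auto
  have xa: "x \<noteq> a" using insert a by auto
  have "prec n x a \<or> prec n a x" using prec_total[OF _ _ xa] insert a by auto
  then show ?case
  proof
    assume "prec n x a" then show ?case using a by auto
  next
    assume ax: "prec n a x"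
    have "\<forall>b\<in>insert x F. b \<noteq> x \<longrightarrow> prec n b x"
      using a ax prec_trans[of n _ a x] by auto
    then show ?case by blast
  qed
qed

definition conv :: "((nat \<Rightarrow> nat) \<Rightarrow> 'a::comm_ring_1) \<Rightarrow> ((nat \<Rightarrow> nat) \<Rightarrow> 'a) \<Rightarrow> ((nat \<Rightarrow> nat) \<Rightarrow> 'a)" where
  "conv A B = (\<lambda>\<mu>. \<Sum>\<alpha>\<in>dsupp A. \<Sum>\<beta>\<in>dsupp B. if (\<lambda>i. \<alpha> i + \<beta> i) = \<mu> then A \<alpha> * B \<beta> else 0)"

lemma conv_sup: "finite S \<Longrightarrow> finite T \<Longrightarrow> dsupp A \<subseteq> S \<Longrightarrow> dsupp B \<subseteq> T \<Longrightarrow>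
   conv A B \<mu> = (\<Sum>\<alpha>\<in>S. \<Sum>\<beta>\<in>T. if (\<lambda>i. \<alpha> i + \<beta> i) = \<mu> then A \<alpha> * B \<beta> else 0)"
proof -
  assume fS: "finite S" and fT: "finite T" and sA: "dsupp A \<subseteq> S" and sB: "dsupp B \<subseteq> T"
  have "conv A B \<mu> = (\<Sum>\<alpha>\<in>S. \<Sum>\<beta>\<in>dsupp B. if (\<lambda>i. \<alpha> i + \<beta> i) = \<mu> then A \<alpha> * B \<beta> else 0)"
    unfolding conv_def by (rule sum.mono_neutral_left[OF fS sA]) (auto simp: dsupp_def intro!: sum.neutral split: if_splits)
  also have "\<dots> = (\<Sum>\<alpha>\<in>S. \<Sum>\<beta>\<in>T. if (\<lambda>i. \<alpha> i + \<beta> i) = \<mu> then A \<alpha> * B \<beta> else 0)"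
    by (intro sum.cong refl sum.mono_neutral_left[OF fT sB]) (auto simp: dsupp_def)
  finally show ?thesis .
qed

lemma conv_comm: "conv A B = conv B A"
  unfolding conv_def
proof (rule ext, subst sum.swap, intro sum.cong refl)
  fix \<mu> :: "nat \<Rightarrow> nat" and i j :: "nat \<Rightarrow> nat"
  have "(\<lambda>ia. i ia + j ia) = (\<lambda>ia. j ia + i ia)" by (rule ext) simp
  then show "(if (\<lambda>ia. i ia + j ia) = \<mu> then A i * B j else 0) = (if (\<lambda>ia. j ia + i ia) = \<mu> then B j * A i else 0)"
    by (simp add: mult.commute)
qed

lemma conv_diff: "is_diffop n A \<Longrightarrow> is_diffop n B \<Longrightarrow> is_diffop n C \<Longrightarrow>
  conv (\<lambda>\<alpha>. A \<alpha> - B \<alpha>) C \<mu> = conv A C \<mu> - conv B C \<mu>"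
proof -
  assume a: "is_diffop n A" and b: "is_diffop n B" and c: "is_diffop n C"
  let ?S = "dsupp A \<union> dsupp B"
  have fS: "finite ?S" and fC: "finite (dsupp C)" using a b c by (auto simp: is_diffop_def)
  have s1: "dsupp A \<subseteq> ?S" "dsupp B \<subseteq> ?S" by auto
  show ?thesis
    unfolding conv_sup[OF fS fC dsupp_diff order_refl] conv_sup[OF fS fC s1(1) order_refl]
      conv_sup[OF fS fC s1(2) order_refl]
    by (simp add: sum_subtractf[symmetric] algebra_simps if_distrib cong: if_cong)
qed

lemma conv_nz:
  fixes A B :: "(nat \<Rightarrow> nat) \<Rightarrow> 'a::idom"
  assumes a: "is_diffop n A" and b: "is_diffop n B" and a0: "A \<noteq> (\<lambda>_. 0)" and b0: "B \<noteq> (\<lambda>_. 0)"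
  shows "conv A B \<noteq> (\<lambda>_. 0)"
proof -
  have fA: "finite (dsupp A)" "dsupp A \<subseteq> multi_idx n" and fB: "finite (dsupp B)" "dsupp B \<subseteq> multi_idx n"
    using a b by (auto simp: is_diffop_def)
  have neA: "dsupp A \<noteq> {}" using a0 by (auto simp: dsupp_def)
  have neB: "dsupp B \<noteq> {}" using b0 by (auto simp: dsupp_def)
  obtain p where p: "p \<in> dsupp A" "\<forall>x\<in>dsupp A. x \<noteq> p \<longrightarrow> prec n x p"
    using prec_max[OF fA(1) neA fA(2)] by blast
  obtain q where q: "q \<in> dsupp B" "\<forall>x\<in>dsupp B. x \<noteq> q \<longrightarrow> prec n x q"
    using prec_max[OF fB(1) neB fB(2)] by blast
  let ?\<mu> = "\<lambda>i. p i + q i"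
  have t: "(if (\<lambda>i. \<alpha> i + \<beta> i) = ?\<mu> then A \<alpha> * B \<beta> else 0) =
      (if \<alpha> = p then (if \<beta> = q then A p * B q else 0) else 0)"
    if al: "\<alpha> \<in> dsupp A" and be: "\<beta> \<in> dsupp B" for \<alpha> \<beta>
  proof (cases "(\<lambda>i. \<alpha> i + \<beta> i) = ?\<mu>")
    case False
    then show ?thesis by auto
  next
    case True
    have "\<alpha> = p \<and> \<beta> = q"
    proof (rule ccontr)
      assume nn: "\<not> (\<alpha> = p \<and> \<beta> = q)"
      show False
      proof (cases "\<alpha> = p")
        case True
        then have "\<beta> \<noteq> q" using nn by auto
        moreover have "\<beta> = q"
        proof
          fix i show "\<beta> i = q i" using fun_cong[OF \<open>(\<lambda>i. \<alpha> i + \<beta> i) = ?\<mu>\<close>, of i] True by simp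
        qed
        ultimately show False by simp
      next
        case False
        then have pa: "prec n \<alpha> p" using p al by auto
        have "prec n (\<lambda>i. \<alpha> i + \<beta> i) (\<lambda>i. p i + \<beta> i)" using prec_add1[OF pa] .
        moreover have "prec n (\<lambda>i. p i + \<beta> i) ?\<mu> \<or> \<beta> = q"
          using q be prec_add2 by blast
        ultimately have "prec n (\<lambda>i. \<alpha> i + \<beta> i) ?\<mu>" using prec_trans by blast
        then show False using True prec_irrefl by metis
      qed
    qed
    then show ?thesis by auto
  qed
  have "conv A B ?\<mu> = (\<Sum>\<alpha>\<in>dsupp A. \<Sum>\<beta>\<in>dsupp B. if \<alpha> = p then (if \<beta> = q then A p * B q else 0) else 0)"
    unfolding conv_def by (intro sum.cong refl) (use t in auto)
  also have "\<dots> = (\<Sum>\<alpha>\<in>dsupp A. if \<alpha> = p then A p * B q else 0)"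
    by (rule sum.cong[OF refl]) (use q(1) fB(1) in \<open>simp add: sum.delta'\<close>)
  also have "\<dots> = A p * B q" using p(1) fA(1) by (simp add: sum.delta')
  also have "\<dots> \<noteq> 0" using p(1) q(1) by (simp add: dsupp_def)
  finally show ?thesis by (metis)
qed

lemma conv_cancel:
  fixes A B C :: "(nat \<Rightarrow> nat) \<Rightarrow> 'a::idom"
  assumes "is_diffop n A" "is_diffop n B" "is_diffop n C" "C \<noteq> (\<lambda>_. 0)" "conv A C = conv B C"
  shows "A = B"
proof (rule ccontr)
  assume "A \<noteq> B"
  then have "(\<lambda>\<alpha>. A \<alpha> - B \<alpha>) \<noteq> (\<lambda>_. 0)" by (metis (no_types) ext eq_iff_diff_eq_0)
  then have "conv (\<lambda>\<alpha>. A \<alpha> - B \<alpha>) C \<noteq> (\<lambda>_. 0)"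
    using conv_nz[OF diffop_diff[OF assms(1,2)] assms(3) _ assms(4)] by blast
  moreover have "conv (\<lambda>\<alpha>. A \<alpha> - B \<alpha>) C = (\<lambda>_. 0)"
    using conv_diff[OF assms(1-3)] assms(5) by auto
  ultimately show False by simp
qed



lemma mdeg_add: "mdeg n (\<lambda>i. \<alpha> i + \<beta> i) = mdeg n \<alpha> + mdeg n \<beta>"
  unfolding mdeg_def by (simp add: sum.distrib)

lemma mdeg_e: "\<gamma> \<le> \<alpha> \<Longrightarrow> mdeg n (\<lambda>i. \<alpha> i - \<gamma> i + \<beta> i) = mdeg n \<alpha> - mdeg n \<gamma> + mdeg n \<beta> \<and> mdeg n \<gamma> \<le> mdeg n \<alpha>"
proof -
  assume g: "\<gamma> \<le> \<alpha>"
  then have g': "\<forall>i\<in>{..<n}. \<gamma> i \<le> \<alpha> i" by (simp add: le_fun_def)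
  have e1: "(\<Sum>i<n. \<alpha> i - \<gamma> i + \<beta> i) = (\<Sum>i<n. \<alpha> i - \<gamma> i) + (\<Sum>i<n. \<beta> i)"
    by (rule sum.distrib)
  have e2: "(\<Sum>i<n. \<alpha> i - \<gamma> i) = (\<Sum>i<n. \<alpha> i) - (\<Sum>i<n. \<gamma> i)"
    using g' by (intro sum_subtractf_nat) auto
  have e3: "(\<Sum>i<n. \<gamma> i) \<le> (\<Sum>i<n. \<alpha> i)" using g' by (intro sum_mono) auto
  show ?thesis unfolding mdeg_def e1 e2 using e3 by simp
qed

lemma mdeg0: "mdeg n \<gamma> = 0 \<Longrightarrow> \<gamma> \<le> \<alpha> \<Longrightarrow> \<alpha> \<in> multi_idx n \<Longrightarrow> \<gamma> = (\<lambda>_. 0)"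
proof (rule ext)
  fix i assume m: "mdeg n \<gamma> = 0" and g: "\<gamma> \<le> \<alpha>" and a: "\<alpha> \<in> multi_idx n"
  show "\<gamma> i = 0"
  proof (cases "i < n")
    case True then show ?thesis using m unfolding mdeg_def by simp
  next
    case False
    have "\<gamma> i \<le> \<alpha> i" using g by (simp add: le_fun_def)
    moreover have "\<alpha> i = 0" using a False by (simp add: multi_idx_def)
    ultimately show ?thesis by simp
  qed
qed

lemma le_dord: "finite (dsupp P) \<Longrightarrow> \<alpha> \<in> dsupp P \<Longrightarrow> mdeg n \<alpha> \<le> dord n P"
  unfolding dord_def by (rule Max_ge) auto

lemma dord_att: "finite (dsupp P) \<Longrightarrow> dsupp P \<noteq> {} \<Longrightarrow> \<exists>\<alpha>\<in>dsupp P. mdeg n \<alpha> = dord n P"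
proof -
  assume f: "finite (dsupp P)" and ne: "dsupp P \<noteq> {}"
  have "dord n P = Max (mdeg n ` dsupp P)"
    unfolding dord_def using f ne by (simp add: Max_insert)
  moreover have "Max (mdeg n ` dsupp P) \<in> mdeg n ` dsupp P" using f ne by (intro Max_in) auto
  ultimately show ?thesis by auto
qed

lemma dsym_supp: "dsupp (dsym n P) = {\<alpha>\<in>dsupp P. mdeg n \<alpha> = dord n P}"
  unfolding dsupp_def dsym_def by auto

lemma diffop_dsym: "is_diffop n P \<Longrightarrow> is_diffop n (dsym n P)"
  unfolding is_diffop_def dsym_supp by auto

lemma dsym_nz: "is_diffop n P \<Longrightarrow> P \<noteq> (\<lambda>_. 0) \<Longrightarrow> dsym n P \<noteq> (\<lambda>_. 0)"
proof -
  assume p: "is_diffop n P" and nz: "P \<noteq> (\<lambda>_. 0)"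
  have "dsupp P \<noteq> {}" using nz by (auto simp: dsupp_def)
  moreover have "finite (dsupp P)" using p by (simp add: is_diffop_def)
  ultimately obtain \<alpha> where "\<alpha> \<in> dsupp P" "mdeg n \<alpha> = dord n P"
    using dord_att[of P n] by blast
  then have "\<alpha> \<in> dsupp (dsym n P)" by (simp add: dsym_supp)
  then show ?thesis by (auto simp: dsupp_def)
qed

lemma dsym_zero: "dsym n (\<lambda>_. 0 :: 'a::zero) = (\<lambda>_. 0)"
  unfolding dsym_def by simp

lemma fx_zero: "fx d xs (\<lambda>_. 0) = id"
  by (induction xs) auto

lemma mbinom_zero: "mbinom n \<alpha> (\<lambda>_. 0) = 1"
  unfolding mbinom_def by simp

lemma conv_deg:
  assumes "conv (dsym n P) (dsym n Q) \<mu> \<noteq> 0"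
  shows "mdeg n \<mu> = dord n P + dord n Q"
proof (rule ccontr)
  assume ne: "mdeg n \<mu> \<noteq> dord n P + dord n Q"
  have "conv (dsym n P) (dsym n Q) \<mu> = 0"
    unfolding conv_def
  proof (intro sum.neutral ballI)
    fix \<alpha> \<beta> assume "\<alpha> \<in> dsupp (dsym n P)" "\<beta> \<in> dsupp (dsym n Q)"
    then have "mdeg n \<alpha> = dord n P" "mdeg n \<beta> = dord n Q" by (auto simp: dsym_supp)
    then have "(\<lambda>i. \<alpha> i + \<beta> i) \<noteq> \<mu>" using ne mdeg_add[of n \<alpha> \<beta>] by auto
    then show "(if (\<lambda>i. \<alpha> i + \<beta> i) = \<mu> then dsym n P \<alpha> * dsym n Q \<beta> else 0) = 0" by simp
  qed
  then show False using assms by simp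
qed

lemma dmul_top:
  fixes P Q :: "(nat \<Rightarrow> nat) \<Rightarrow> 'a::field"
  assumes p: "is_diffop n P" and q: "is_diffop n Q" and m: "mdeg n \<mu> \<ge> dord n P + dord n Q"
  shows "dmul d n P Q \<mu> = (if mdeg n \<mu> = dord n P + dord n Q then conv (dsym n P) (dsym n Q) \<mu> else 0)"
proof -
  let ?A = "dsupp P" and ?B = "dsupp Q" and ?s = "dord n P + dord n Q"
  have fA: "finite ?A" and fB: "finite ?B" and sA: "?A \<subseteq> multi_idx n" and sB: "?B \<subseteq> multi_idx n"
    using p q by (auto simp: is_diffop_def)
  define R where "R \<alpha> \<beta> = (if mdeg n \<alpha> = dord n P \<and> mdeg n \<beta> = dord n Q \<and> (\<lambda>i. \<alpha> i + \<beta> i) = \<mu> \<and> mdeg n \<mu> = ?s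
      then P \<alpha> * Q \<beta> else 0)" for \<alpha> \<beta>
  have trm: "(if (\<lambda>i. \<alpha> i - \<gamma> i + \<beta> i) = \<mu> then of_nat (mbinom n \<alpha> \<gamma>) * P \<alpha> * dmono d n \<gamma> (Q \<beta>) else 0)
      = (if \<gamma> = (\<lambda>_. 0) then R \<alpha> \<beta> else 0)"
    if a: "\<alpha> \<in> ?A" and b: "\<beta> \<in> ?B" and g: "\<gamma> \<le> \<alpha>" for \<alpha> \<beta> \<gamma>
  proof (cases "(\<lambda>i. \<alpha> i - \<gamma> i + \<beta> i) = \<mu>")
    case True
    have da: "mdeg n \<alpha> \<le> dord n P" using le_dord[OF fA a] .
    have db: "mdeg n \<beta> \<le> dord n Q" using le_dord[OF fB b] .
    have me: "mdeg n \<mu> = mdeg n \<alpha> - mdeg n \<gamma> + mdeg n \<beta>" "mdeg n \<gamma> \<le> mdeg n \<alpha>"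
      using mdeg_e[OF g, of n \<beta>] True by auto
    then have "mdeg n \<gamma> = 0" "mdeg n \<alpha> = dord n P" "mdeg n \<beta> = dord n Q" "mdeg n \<mu> = ?s"
      using da db m by linarith+
    then have g0: "\<gamma> = (\<lambda>_. 0)" using mdeg0[OF _ g] sA a by auto
    then have "(\<lambda>i. \<alpha> i + \<beta> i) = \<mu>" using True by simp
    then show ?thesis using True g0 \<open>mdeg n \<alpha> = dord n P\<close> \<open>mdeg n \<beta> = dord n Q\<close> \<open>mdeg n \<mu> = ?s\<close>
      by (simp add: R_def mbinom_zero dmono_fx fx_zero)
  next
    case False
    then show ?thesis by (auto simp: R_def)
  qed
  have "dmul d n P Q \<mu> = (\<Sum>\<alpha>\<in>?A. \<Sum>\<beta>\<in>?B. \<Sum>\<gamma>\<in>{\<gamma>. \<gamma> \<le> \<alpha>}. if \<gamma> = (\<lambda>_. 0) then R \<alpha> \<beta> else 0)"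
    unfolding dmul_def by (intro sum.cong refl) (use trm in auto)
  also have "\<dots> = (\<Sum>\<alpha>\<in>?A. \<Sum>\<beta>\<in>?B. R \<alpha> \<beta>)"
  proof (intro sum.cong refl)
    fix \<alpha> \<beta> assume a: "\<alpha> \<in> ?A"
    have f: "finite {\<gamma>. \<gamma> \<le> \<alpha>}" using finite_le sA a by blast
    have z: "(\<lambda>_. 0) \<in> {\<gamma>. \<gamma> \<le> \<alpha>}" by (simp add: le_fun_def)
    show "(\<Sum>\<gamma>\<in>{\<gamma>. \<gamma> \<le> \<alpha>}. if \<gamma> = (\<lambda>_. 0) then R \<alpha> \<beta> else 0) = R \<alpha> \<beta>"
      using f z by (simp add: sum.delta')
  qed
  also have "\<dots> = (if mdeg n \<mu> = ?s then conv (dsym n P) (dsym n Q) \<mu> else 0)"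
  proof (cases "mdeg n \<mu> = ?s")
    case True
    have s1: "dsupp (dsym n P) \<subseteq> ?A" and s2: "dsupp (dsym n Q) \<subseteq> ?B" by (auto simp: dsym_supp)
    have "(\<Sum>\<alpha>\<in>?A. \<Sum>\<beta>\<in>?B. R \<alpha> \<beta>) = conv (dsym n P) (dsym n Q) \<mu>"
      unfolding conv_sup[OF fA fB s1 s2]
      by (intro sum.cong refl) (use True in \<open>auto simp: R_def dsym_def\<close>)
    then show ?thesis using True by simp
  next
    case False then show ?thesis by (simp add: R_def)
  qed
  finally show ?thesis .
qed


context dfld begin

lemma sym_mult:
  assumes p: "is_diffop n P" and q: "is_diffop n Q" and p0: "P \<noteq> (\<lambda>_. 0)" and q0: "Q \<noteq> (\<lambda>_. 0)"
  shows "dsym n (dmul d n P Q) = conv (dsym n P) (dsym n Q)"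
proof -
  let ?s = "dord n P + dord n Q" and ?C = "conv (dsym n P) (dsym n Q)" and ?PQ = "dmul d n P Q"
  have pq: "is_diffop n ?PQ" using act_dmul[OF p q] by blast
  have fPQ: "finite (dsupp ?PQ)" using pq by (simp add: is_diffop_def)
  have "?C \<noteq> (\<lambda>_. 0)"
    using conv_nz[OF diffop_dsym[OF p] diffop_dsym[OF q] dsym_nz[OF p p0] dsym_nz[OF q q0]] .
  then obtain \<mu>0 where c0: "?C \<mu>0 \<noteq> 0" by auto
  have m0: "mdeg n \<mu>0 = ?s" using conv_deg[OF c0] .
  have e0: "?PQ \<mu>0 = ?C \<mu>0" using dmul_top[OF p q, of \<mu>0 d] m0 by simp
  have le: "mdeg n \<mu> \<le> ?s" if "\<mu> \<in> dsupp ?PQ" for \<mu>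
  proof (rule ccontr)
    assume "\<not> mdeg n \<mu> \<le> ?s"
    then have "?PQ \<mu> = 0" using dmul_top[OF p q, of \<mu> d] by simp
    then show False using that by (simp add: dsupp_def)
  qed
  have ord: "dord n ?PQ = ?s"
    unfolding dord_def[of n ?PQ]
  proof (rule Max_eqI)
    show "finite (insert 0 (mdeg n ` dsupp ?PQ))" using fPQ by simp
    show "y \<le> ?s" if "y \<in> insert 0 (mdeg n ` dsupp ?PQ)" for y using that le by auto
    show "?s \<in> insert 0 (mdeg n ` dsupp ?PQ)"
    proof -
      have "\<mu>0 \<in> dsupp ?PQ" using e0 c0 by (simp add: dsupp_def)
      then have "mdeg n \<mu>0 \<in> mdeg n ` dsupp ?PQ" by (rule imageI)
      then show ?thesis using m0 by simp
    qed
  qed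
  show ?thesis
  proof
    fix \<mu>
    show "dsym n ?PQ \<mu> = ?C \<mu>"
    proof (cases "mdeg n \<mu> = ?s")
      case True then show ?thesis using dmul_top[OF p q, of \<mu> d] ord by (simp add: dsym_def)
    next
      case False
      then have "?C \<mu> = 0" using conv_deg by blast
      then show ?thesis using False ord by (simp add: dsym_def)
    qed
  qed
qed

lemma op_domain:
  assumes p: "is_diffop n P" and q: "is_diffop n Q" and p0: "P \<noteq> (\<lambda>_. 0)" and q0: "Q \<noteq> (\<lambda>_. 0)"
  shows "dmul d n P Q \<noteq> (\<lambda>_. 0)"
proof
  assume "dmul d n P Q = (\<lambda>_. 0)"
  then have "conv (dsym n P) (dsym n Q) = (\<lambda>_. 0)"
    using sym_mult[OF assms] dsym_zero by metis
  then show False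
    using conv_nz[OF diffop_dsym[OF p] diffop_dsym[OF q] dsym_nz[OF p p0] dsym_nz[OF q q0]] by simp
qed

end


lemma dmul_zero_right: "dmul d n P (\<lambda>_. 0) = (\<lambda>_. 0)"
  unfolding dmul_def dsupp_def by simp
lemma dmul_zero_left: "dmul d n (\<lambda>_. 0) Q = (\<lambda>_. 0)"
  unfolding dmul_def dsupp_def by simp

theorem lemma1:
  fixes n :: nat and d :: "nat \<Rightarrow> 'a::field_char_0 \<Rightarrow> 'a"
    and L L1 X1 X2 H \<omega> :: "(nat \<Rightarrow> nat) \<Rightarrow> 'a"
  assumes "diff_field n d"
    and "is_diffop n X1" and "is_diffop n X2" and "is_diffop n H"
    and "H \<noteq> (\<lambda>_. 0)"
    and "L = (\<lambda>\<mu>. dmul d n X1 X2 \<mu> - H \<mu>)"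
    and "is_diffop n \<omega>"
    and "dmul d n \<omega> H = (\<lambda>\<mu>. - dcomm d n X2 H \<mu>)"
    and "L1 = (\<lambda>\<mu>. dmul d n X2 X1 \<mu> + dmul d n \<omega> X1 \<mu> - H \<mu>)"
  shows "dsym n L = dsym n L1"
proof -
  interpret dfld n d by unfold_locales (rule assms(1))
  note x1 = assms(2) and x2 = assms(3) and h = assms(4) and h0 = assms(5) and w = assms(7)
  define W where "W = (\<lambda>\<mu>. \<omega> \<mu> + X2 \<mu>)"
  have dW: "is_diffop n W" unfolding W_def by (rule diffop_add[OF w x2])
  have D: "is_diffop n (dmul d n P Q)" if "is_diffop n P" "is_diffop n Q" for P Q
    using act_dmul[OF that] by blast
  have A: "act d n (dmul d n P Q) g = act d n P (act d n Q g)" if "is_diffop n P" "is_diffop n Q" for P Q g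
    using act_dmul[OF that] by blast
  have dL: "is_diffop n L" unfolding assms(6) by (intro diffop_diff D x1 x2 h)
  have dL1: "is_diffop n L1" unfolding assms(9) by (intro diffop_diff diffop_add D x1 x2 h w)
  have dc: "dcomm d n X2 H = (\<lambda>\<mu>. dmul d n X2 H \<mu> - dmul d n H X2 \<mu>)"
    unfolding dcomm_def ..
  have eq1: "dmul d n W H = dmul d n H X2"
  proof (rule faithful[OF D[OF dW h] D[OF h x2]])
    fix g
    have "act d n (dmul d n W H) g = act d n W (act d n H g)" by (rule A[OF dW h])
    also have "\<dots> = (\<lambda>v. act d n \<omega> (act d n H g) v + act d n X2 (act d n H g) v)"
      unfolding W_def by (rule act_add[OF w x2])
    also have "act d n \<omega> (act d n H g) = act d n (dmul d n \<omega> H) g" by (rule A[OF w h, symmetric])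
    also have "\<dots> = (\<lambda>v. - (act d n (dmul d n X2 H) g v - act d n (dmul d n H X2) g v))"
      unfolding assms(8) act_neg dc act_diff[OF D[OF x2 h] D[OF h x2]] ..
    also have "act d n X2 (act d n H g) = act d n (dmul d n X2 H) g" by (rule A[OF x2 h, symmetric])
    finally show "act d n (dmul d n W H) g = act d n (dmul d n H X2) g" by simp
  qed
  have eq2: "dmul d n W L = dmul d n L1 X2"
  proof (rule faithful[OF D[OF dW dL] D[OF dL1 x2]])
    fix g
    let ?f = "act d n X2 g"
    have "act d n (dmul d n W L) g = act d n W (act d n L g)" by (rule A[OF dW dL])
    also have "act d n L g = (\<lambda>v. act d n X1 ?f v - act d n H g v)"
      unfolding assms(6) act_diff[OF D[OF x1 x2] h] A[OF x1 x2] ..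
    also have "act d n W \<dots> = (\<lambda>v. act d n W (act d n X1 ?f) v - act d n W (act d n H g) v)"
      by (rule lin_diff[OF lin_act])
    also have "act d n W (act d n H g) = act d n H ?f"
      using A[OF dW h, of g] eq1 A[OF h x2, of g] by simp
    also have "act d n W (act d n X1 ?f) = (\<lambda>v. act d n \<omega> (act d n X1 ?f) v + act d n X2 (act d n X1 ?f) v)"
      unfolding W_def by (rule act_add[OF w x2])
    finally have lhs: "act d n (dmul d n W L) g = (\<lambda>v. act d n \<omega> (act d n X1 ?f) v + act d n X2 (act d n X1 ?f) v - act d n H ?f v)"
      by simp
    have "act d n (dmul d n L1 X2) g = act d n L1 ?f" by (rule A[OF dL1 x2])
    also have "act d n L1 ?f = (\<lambda>v. act d n X2 (act d n X1 ?f) v + act d n \<omega> (act d n X1 ?f) v - act d n H ?f v)"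
      unfolding assms(9) act_diff[OF diffop_add[OF D[OF x2 x1] D[OF w x1]] h]
        act_add[OF D[OF x2 x1] D[OF w x1]] A[OF x2 x1] A[OF w x1] ..
    finally show "act d n (dmul d n W L) g = act d n (dmul d n L1 X2) g"
      unfolding lhs by (simp add: algebra_simps)
  qed
  show ?thesis
  proof (cases "X2 = (\<lambda>_. 0)")
    case True
    have "dmul d n W H = (\<lambda>_. 0)" using eq1 by (simp add: True dmul_zero_right)
    then have W0: "W = (\<lambda>_. 0)" using op_domain[OF dW h _ h0] by blast
    have "\<omega> = (\<lambda>_. 0)"
    proof
      fix \<mu> show "\<omega> \<mu> = 0" using fun_cong[OF W0, of \<mu>] fun_cong[OF True, of \<mu>] unfolding W_def by simp
    qed
    then have "L = L1" unfolding assms(6) assms(9) using True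
      by (simp add: dmul_zero_right dmul_zero_left)
    then show ?thesis by simp
  next
    case False
    have hx: "dmul d n H X2 \<noteq> (\<lambda>_. 0)" using op_domain[OF h x2 h0 False] .
    have W0: "W \<noteq> (\<lambda>_. 0)"
    proof
      assume "W = (\<lambda>_. 0)"
      then have "dmul d n W H = (\<lambda>_. 0)" by (simp add: dmul_zero_left)
      then show False using eq1 hx by simp
    qed
    have c1: "dsym n (dmul d n W H) = conv (dsym n W) (dsym n H)" by (rule sym_mult[OF dW h W0 h0])
    have c2: "dsym n (dmul d n H X2) = conv (dsym n H) (dsym n X2)" by (rule sym_mult[OF h x2 h0 False])
    have sW: "dsym n W = dsym n X2"
    proof (rule conv_cancel[OF diffop_dsym[OF dW] diffop_dsym[OF x2] diffop_dsym[OF h] dsym_nz[OF h h0]])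
      show "conv (dsym n W) (dsym n H) = conv (dsym n X2) (dsym n H)"
        using c1 c2 eq1 conv_comm[of "dsym n H" "dsym n X2"] by simp
    qed
    show ?thesis
    proof (cases "L = (\<lambda>_. 0) \<or> L1 = (\<lambda>_. 0)")
      case True
      have "L = (\<lambda>_. 0) \<and> L1 = (\<lambda>_. 0)"
      proof (cases "L = (\<lambda>_. 0)")
        case L0: True
        have "dmul d n L1 X2 = (\<lambda>_. 0)" using eq2 L0 by (simp add: dmul_zero_right)
        then have "L1 = (\<lambda>_. 0)" using op_domain[OF dL1 x2 _ False] by blast
        then show ?thesis using L0 by simp
      next
        case L0: False
        then have L10: "L1 = (\<lambda>_. 0)" using True by simp
        have "dmul d n W L = (\<lambda>_. 0)" using eq2 L10 by (simp add: dmul_zero_left)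
        then have "L = (\<lambda>_. 0)" using op_domain[OF dW dL W0] by blast
        then show ?thesis using L0 by simp
      qed
      then show ?thesis by simp
    next
      case nz: False
      then have l0: "L \<noteq> (\<lambda>_. 0)" and l10: "L1 \<noteq> (\<lambda>_. 0)" by auto
      have c3: "dsym n (dmul d n W L) = conv (dsym n W) (dsym n L)" by (rule sym_mult[OF dW dL W0 l0])
      have c4: "dsym n (dmul d n L1 X2) = conv (dsym n L1) (dsym n X2)" by (rule sym_mult[OF dL1 x2 l10 False])
      show ?thesis
      proof (rule conv_cancel[OF diffop_dsym[OF dL] diffop_dsym[OF dL1] diffop_dsym[OF x2] dsym_nz[OF x2 False]])
        show "conv (dsym n L) (dsym n X2) = conv (dsym n L1) (dsym n X2)"
          using c3 c4 eq2 sW conv_comm[of "dsym n L" "dsym n X2"] by simp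
      qed
    qed
  qed
qed


end
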